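(* Let $G$ be a graph with no edge $e$ satisfying $|F_e|\ge 4$, no induced chordless cycle on 4 vertices, and no induced path on at least 7 vertices, and let $u,v,w$ be an induced path on three vertices in $G$, with $E_i$ and $j$ defined from $u,v,w$ as in the context. Then $|E_j|\le|E_{j-1}|\le\cdots\le|E_0|$; that is, $|E_i|\le|E_{i-1}|$ for every integer $i$ with $1\le i\le j$ (for all $i\ge1$ if $j=\infty$).
   Context: All graphs are finite, simple and undirected. For an edge $e$ of $G$, $F_e$ denotes the set of all edges $e'$ of $G$ such that $V(e)\cup V(e')$ induces a path on three vertices in $G$. Let $u,v,w$ be an induced path on three vertices ($uv,vw\in E(G)$, $uw\notin E(G)$), and $A=\{u,v,w\}$. $B$ is the set of vertices not in $A$ with exactly one or two neighbors in $A$; $C$ is the set of vertices adjacent to all three vertices of $A$; $D$ is the set of vertices not in $A\cup B\cup C$ with at least one neighbor in $C$. For $i\ge1$, $B_i$ is the set of vertices $x\notin A\cup B\cup C\cup D$ whose distance in $G$ to the set $B$ is exactly $i$; $B_0=B$, $B_{-1}=A$. For $i\ge0$, $E_i$ is the set of edges with one endpoint in $B_i$ and the other in $B_{i+1}$. $j$ is the minimum index $i\ge0$ such that there is an edge $e\in E_i$ with $|F_e|\ge3$, and $j=\infty$ if no such index exists. *)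

theory Defs
  imports Main "HOL-Library.Extended_Nat"
begin

definition graph :: "'a set \<Rightarrow> ('a \<Rightarrow> 'a \<Rightarrow> bool) \<Rightarrow> bool" where
  "graph V adj \<longleftrightarrow> finite V \<and> (\<forall>x y. adj x y \<longrightarrow> x \<in> V \<and> y \<in> V)
     \<and> (\<forall>x y. adj x y \<longrightarrow> adj y x) \<and> (\<forall>x. \<not> adj x x)"

definition edges :: "('a \<Rightarrow> 'a \<Rightarrow> bool) \<Rightarrow> 'a set set" where
  "edges adj = {{x, y} | x y. adj x y}"

definition induces_P3 :: "('a \<Rightarrow> 'a \<Rightarrow> bool) \<Rightarrow> 'a set \<Rightarrow> bool" where
  "induces_P3 adj S \<longleftrightarrow> (\<exists>x y z. x \<noteq> y \<and> y \<noteq> z \<and> x \<noteq> z \<and> S = {x, y, z}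
       \<and> adj x y \<and> adj y z \<and> \<not> adj x z)"

definition Fset :: "('a \<Rightarrow> 'a \<Rightarrow> bool) \<Rightarrow> 'a set \<Rightarrow> 'a set set" where
  "Fset adj e = {e' \<in> edges adj. induces_P3 adj (e \<union> e')}"

definition induced_path :: "('a \<Rightarrow> 'a \<Rightarrow> bool) \<Rightarrow> 'a list \<Rightarrow> bool" where
  "induced_path adj xs \<longleftrightarrow> distinct xs \<and>
     (\<forall>a < length xs. \<forall>b < length xs. adj (xs ! a) (xs ! b) \<longleftrightarrow> (a = b + 1 \<or> b = a + 1))"

definition induced_C4 :: "('a \<Rightarrow> 'a \<Rightarrow> bool) \<Rightarrow> 'a \<Rightarrow> 'a \<Rightarrow> 'a \<Rightarrow> 'a \<Rightarrow> bool" where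
  "induced_C4 adj a b c d \<longleftrightarrow> distinct [a, b, c, d] \<and>
     adj a b \<and> adj b c \<and> adj c d \<and> adj d a \<and> \<not> adj a c \<and> \<not> adj b d"

definition walk_to :: "('a \<Rightarrow> 'a \<Rightarrow> bool) \<Rightarrow> 'a \<Rightarrow> 'a set \<Rightarrow> nat \<Rightarrow> bool" where
  "walk_to adj x S n \<longleftrightarrow> (\<exists>xs. length xs = n + 1 \<and> hd xs = x \<and> last xs \<in> S \<and>
      (\<forall>k < n. adj (xs ! k) (xs ! (k + 1))))"

definition dist_set_eq :: "('a \<Rightarrow> 'a \<Rightarrow> bool) \<Rightarrow> 'a \<Rightarrow> 'a set \<Rightarrow> nat \<Rightarrow> bool" where
  "dist_set_eq adj x S n \<longleftrightarrow> walk_to adj x S n \<and> (\<forall>m < n. \<not> walk_to adj x S m)"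

definition Aset :: "'a \<Rightarrow> 'a \<Rightarrow> 'a \<Rightarrow> 'a set" where
  "Aset u v w = {u, v, w}"

definition Bbase :: "'a set \<Rightarrow> ('a \<Rightarrow> 'a \<Rightarrow> bool) \<Rightarrow> 'a \<Rightarrow> 'a \<Rightarrow> 'a \<Rightarrow> 'a set" where
  "Bbase V adj u v w = {x \<in> V - Aset u v w.
      card {a \<in> Aset u v w. adj x a} = 1 \<or> card {a \<in> Aset u v w. adj x a} = 2}"

definition Cset :: "'a set \<Rightarrow> ('a \<Rightarrow> 'a \<Rightarrow> bool) \<Rightarrow> 'a \<Rightarrow> 'a \<Rightarrow> 'a \<Rightarrow> 'a set" where
  "Cset V adj u v w = {x \<in> V. adj x u \<and> adj x v \<and> adj x w}"

definition Dset :: "'a set \<Rightarrow> ('a \<Rightarrow> 'a \<Rightarrow> bool) \<Rightarrow> 'a \<Rightarrow> 'a \<Rightarrow> 'a \<Rightarrow> 'a set" where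
  "Dset V adj u v w = {x \<in> V - (Aset u v w \<union> Bbase V adj u v w \<union> Cset V adj u v w).
      \<exists>c \<in> Cset V adj u v w. adj x c}"

fun Bi :: "'a set \<Rightarrow> ('a \<Rightarrow> 'a \<Rightarrow> bool) \<Rightarrow> 'a \<Rightarrow> 'a \<Rightarrow> 'a \<Rightarrow> nat \<Rightarrow> 'a set" where
  "Bi V adj u v w 0 = Bbase V adj u v w"
| "Bi V adj u v w (Suc i) = {x \<in> V - (Aset u v w \<union> Bbase V adj u v w \<union> Cset V adj u v w
      \<union> Dset V adj u v w). dist_set_eq adj x (Bbase V adj u v w) (Suc i)}"

definition Ei :: "'a set \<Rightarrow> ('a \<Rightarrow> 'a \<Rightarrow> bool) \<Rightarrow> 'a \<Rightarrow> 'a \<Rightarrow> 'a \<Rightarrow> nat \<Rightarrow> 'a set set" where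
  "Ei V adj u v w i = {{x, y} | x y. adj x y \<and> x \<in> Bi V adj u v w i \<and> y \<in> Bi V adj u v w (Suc i)}"

definition jidx :: "'a set \<Rightarrow> ('a \<Rightarrow> 'a \<Rightarrow> bool) \<Rightarrow> 'a \<Rightarrow> 'a \<Rightarrow> 'a \<Rightarrow> enat" where
  "jidx V adj u v w =
     (if \<exists>i. \<exists>e \<in> Ei V adj u v w i. card (Fset adj e) \<ge> 3
      then enat (LEAST i. \<exists>e \<in> Ei V adj u v w i. card (Fset adj e) \<ge> 3)
      else \<infinity>)"

end

theory Submission
  imports Defs
begin
lemma walk0: "walk_to adj x S 0 \<longleftrightarrow> x \<in> S"
  unfolding walk_to_def
proof
  assume "\<exists>xs. length xs = 0 + 1 \<and> hd xs = x \<and> last xs \<in> S \<and> (\<forall>k<0. adj (xs ! k) (xs ! (k + 1)))"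
  then obtain xs where "length xs = 1" "hd xs = x" "last xs \<in> S" by auto
  then show "x \<in> S" by (cases xs) auto
next
  assume "x \<in> S" then show "\<exists>xs. length xs = 0 + 1 \<and> hd xs = x \<and> last xs \<in> S \<and> (\<forall>k<0. adj (xs ! k) (xs ! (k + 1)))"
    by (intro exI[of _ "[x]"]) auto
qed

lemma walkSuc: "walk_to adj x S (Suc n) \<longleftrightarrow> (\<exists>x'. adj x x' \<and> walk_to adj x' S n)"
proof
  assume "walk_to adj x S (Suc n)"
  then obtain xs where xs: "length xs = Suc n + 1" "hd xs = x" "last xs \<in> S"
    "\<forall>k < Suc n. adj (xs ! k) (xs ! (k + 1))" unfolding walk_to_def by blast
  then obtain y ys where xsc: "xs = y # ys" by (cases xs) auto
  have "adj x (ys ! 0)" using xs(2,4) xsc by force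
  moreover have "walk_to adj (ys ! 0) S n"
    unfolding walk_to_def
  proof (intro exI[of _ ys] conjI allI impI)
    show "length ys = n + 1" using xs xsc by simp
    then show "hd ys = ys ! 0" by (cases ys) auto
    show "last ys \<in> S" using xs xsc \<open>length ys = n + 1\<close> by (cases ys) auto
    fix k assume "k < n"
    then show "adj (ys ! k) (ys ! (k + 1))" using xs(4)[rule_format, of "Suc k"] xsc by simp
  qed
  ultimately show "\<exists>x'. adj x x' \<and> walk_to adj x' S n" by blast
next
  assume "\<exists>x'. adj x x' \<and> walk_to adj x' S n"
  then obtain x' xs where h: "adj x x'" "length xs = n + 1" "hd xs = x'" "last xs \<in> S"
    "\<forall>k < n. adj (xs ! k) (xs ! (k + 1))" unfolding walk_to_def by blast
  then have ne: "xs \<noteq> []" by auto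
  show "walk_to adj x S (Suc n)" unfolding walk_to_def
  proof (intro exI[of _ "x # xs"] conjI allI impI)
    show "length (x # xs) = Suc n + 1" using h by simp
    show "hd (x # xs) = x" by simp
    show "last (x # xs) \<in> S" using h ne by simp
    fix k assume k: "k < Suc n"
    show "adj ((x # xs) ! k) ((x # xs) ! (k + 1))"
    proof (cases k)
      case 0 then show ?thesis using h ne by (simp add: hd_conv_nth)
    next
      case (Suc k') then show ?thesis using h k by simp
    qed
  qed
qed


lemma Bi_walk: "x \<in> Bi V adj u v w k \<Longrightarrow> walk_to adj x (Bbase V adj u v w) k"
  by (cases k) (auto simp: walk0 dist_set_eq_def)

lemma Bi_min: "x \<in> Bi V adj u v w k \<Longrightarrow> m < k \<Longrightarrow> \<not> walk_to adj x (Bbase V adj u v w) m"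
  by (cases k) (auto simp: dist_set_eq_def)

lemma Bi_disj: "x \<in> Bi V adj u v w k \<Longrightarrow> x \<in> Bi V adj u v w m \<Longrightarrow> k = m"
proof (rule ccontr)
  assume a: "x \<in> Bi V adj u v w k" "x \<in> Bi V adj u v w m" "k \<noteq> m"
  show False
  proof (cases "k < m")
    case True then show False using Bi_min[OF a(2) True] Bi_walk[OF a(1)] by blast
  next
    case False then have "m < k" using a(3) by simp
    then show False using Bi_min[OF a(1)] Bi_walk[OF a(2)] by blast
  qed
qed

lemma Bi_adj: "x \<in> Bi V adj u v w k \<Longrightarrow> z \<in> Bi V adj u v w m \<Longrightarrow> adj z x \<Longrightarrow> m \<le> Suc k"
proof (rule ccontr)
  assume a: "x \<in> Bi V adj u v w k" "z \<in> Bi V adj u v w m" "adj z x" "\<not> m \<le> Suc k"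
  have "walk_to adj z (Bbase V adj u v w) (Suc k)" using walkSuc[THEN iffD2, OF exI, OF conjI, OF a(3) Bi_walk[OF a(1)]] .
  moreover have "Suc k < m" using a(4) by simp
  ultimately show False using Bi_min[OF a(2)] by blast
qed

lemma Bi_V: "x \<in> Bi V adj u v w k \<Longrightarrow> x \<in> V"
  by (cases k) (auto simp: Bbase_def)

lemma Bi_Suc: "x \<in> Bi V adj u v w (Suc k) \<Longrightarrow> x \<in> V \<and> x \<notin> Aset u v w \<and> x \<notin> Bbase V adj u v w
   \<and> x \<notin> Cset V adj u v w \<and> x \<notin> Dset V adj u v w"
  by auto

lemma FI:
  assumes "graph V adj" "adj a b" "adj b c" "\<not> adj a c" "a \<noteq> c"
  shows "{b, c} \<in> Fset adj {a, b}"
proof -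
  have "a \<noteq> b" "b \<noteq> c" using assms unfolding graph_def by auto
  have "{b, c} \<in> edges adj" unfolding edges_def using assms by blast
  moreover have "induces_P3 adj ({a, b} \<union> {b, c})"
    unfolding induces_P3_def using assms \<open>a \<noteq> b\<close> \<open>b \<noteq> c\<close>
    by (intro exI[of _ a] exI[of _ b] exI[of _ c]) auto
  ultimately show ?thesis unfolding Fset_def by blast
qed

lemma Fset_finite: "graph V adj \<Longrightarrow> finite (Fset adj e)"
proof -
  assume g: "graph V adj"
  have "Fset adj e \<subseteq> Pow V" unfolding Fset_def edges_def using g unfolding graph_def by auto
  moreover have "finite (Pow V)" using g unfolding graph_def by auto
  ultimately show ?thesis by (rule finite_subset)
qed

context
  fixes V :: "'a set" and adj :: "'a \<Rightarrow> 'a \<Rightarrow> bool" and u v w :: 'a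
  assumes G: "graph V adj"
    and F4: "\<forall>e \<in> edges adj. card (Fset adj e) < 4"
    and uv: "adj u v" and vw: "adj v w" and uw: "u \<noteq> w" and nuw: "\<not> adj u w"
begin

lemma sym: "adj x y \<Longrightarrow> adj y x" using G unfolding graph_def by blast
lemma irr: "\<not> adj x x" using G unfolding graph_def by blast
lemma inV: "adj x y \<Longrightarrow> x \<in> V" using G unfolding graph_def by blast

lemma noA:
  assumes "x \<in> V" "x \<notin> Aset u v w" "x \<notin> Bbase V adj u v w" "x \<notin> Cset V adj u v w"
  shows "\<not> adj x u \<and> \<not> adj x v \<and> \<not> adj x w"
proof -
  have d: "u \<noteq> v" "v \<noteq> w" using uv vw irr by auto
  have ne: "{a \<in> Aset u v w. adj x a} = {} \<or> {a \<in> Aset u v w. adj x a} = Aset u v w"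
  proof (rule ccontr)
    assume h: "\<not> ?thesis"
    let ?S = "{a \<in> Aset u v w. adj x a}"
    have fin: "finite ?S" unfolding Aset_def by auto
    have "card ?S \<noteq> 0" using h fin by auto
    moreover have "?S \<subset> Aset u v w" using h by auto
    then have "card ?S < card (Aset u v w)" unfolding Aset_def by (intro psubset_card_mono) auto
    moreover have "card (Aset u v w) = 3" using d uw unfolding Aset_def by auto
    ultimately have "card ?S = 1 \<or> card ?S = 2" by linarith
    then have "x \<in> Bbase V adj u v w" using assms(1,2) unfolding Bbase_def by auto
    then show False using assms(3) by blast
  qed
  show ?thesis
  proof (cases "{a \<in> Aset u v w. adj x a} = {}")
    case True then show ?thesis unfolding Aset_def by auto
  next
    case False
    then have "\<forall>a \<in> Aset u v w. adj x a" using ne by auto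
    then have "x \<in> Cset V adj u v w" using assms(1) sym unfolding Cset_def Aset_def by auto
    then show ?thesis using assms(4) by blast
  qed
qed

lemma noC:
  assumes "x \<in> V" "x \<notin> Aset u v w" "x \<notin> Bbase V adj u v w" "x \<notin> Cset V adj u v w"
    "x \<notin> Dset V adj u v w" "c \<in> Cset V adj u v w"
  shows "\<not> adj x c"
  using assms unfolding Dset_def by auto

lemma D_excl:
  assumes x: "x \<in> Dset V adj u v w" and y: "y \<in> V" "y \<notin> Aset u v w" "y \<notin> Bbase V adj u v w"
    "y \<notin> Cset V adj u v w" "y \<notin> Dset V adj u v w" and xy: "adj x y"
  shows False
proof -
  obtain c where c: "c \<in> Cset V adj u v w" "adj x c" using x unfolding Dset_def by blast
  have xV: "x \<in> V" "x \<notin> Aset u v w" "x \<notin> Bbase V adj u v w" "x \<notin> Cset V adj u v w"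
    using x unfolding Dset_def by auto
  have nxA: "\<not> adj x u" "\<not> adj x v" "\<not> adj x w" using noA[OF xV] by auto
  have nyc: "\<not> adj y c" using noC[OF y c(1)] .
  have cA: "adj c u" "adj c v" "adj c w" using c(1) unfolding Cset_def by auto
  have xA: "x \<noteq> u" "x \<noteq> v" "x \<noteq> w" using xV(2) unfolding Aset_def by auto
  have yc: "y \<noteq> c" using y(4) c(1) by blast
  have d: "u \<noteq> v" "v \<noteq> w" using uv vw irr by auto
  have cu: "c \<noteq> u" "c \<noteq> v" "c \<noteq> w" using cA irr by auto
  have xc: "x \<noteq> c" using c irr by auto
  have f1: "{c, u} \<in> Fset adj {x, c}" by (rule FI[OF G c(2) cA(1) nxA(1) xA(1)])
  have f2: "{c, v} \<in> Fset adj {x, c}" by (rule FI[OF G c(2) cA(2) nxA(2) xA(2)])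
  have f3: "{c, w} \<in> Fset adj {x, c}" by (rule FI[OF G c(2) cA(3) nxA(3) xA(3)])
  have f4: "{x, y} \<in> Fset adj {x, c}"
    using FI[OF G sym[OF c(2)] xy nyc[THEN contrapos_nn, OF sym] yc[symmetric]] by (simp add: insert_commute)
  have sub: "{{c, u}, {c, v}, {c, w}, {x, y}} \<subseteq> Fset adj {x, c}" using f1 f2 f3 f4 by auto
  have "card {{c, u}, {c, v}, {c, w}, {x, y}} = 4"
    using d uw cu xc xA by (auto simp: doubleton_eq_iff)
  then have "card (Fset adj {x, c}) \<ge> 4" using card_mono[OF Fset_finite[OF G] sub] by simp
  moreover have "{x, c} \<in> edges adj" unfolding edges_def using c(2) by blast
  ultimately show False using F4 by fastforce
qed

lemma Bi_up:
  assumes y: "y \<in> Bi V adj u v w (Suc k)"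
  shows "\<exists>x \<in> Bi V adj u v w k. adj x y"
proof -
  have yp: "y \<in> V" "y \<notin> Aset u v w" "y \<notin> Bbase V adj u v w" "y \<notin> Cset V adj u v w"
    "y \<notin> Dset V adj u v w" using y by auto
  obtain x where x: "adj y x" "walk_to adj x (Bbase V adj u v w) k"
    using walkSuc[THEN iffD1, OF Bi_walk[OF y]] by blast
  have ymin: "\<And>m. m < Suc k \<Longrightarrow> \<not> walk_to adj y (Bbase V adj u v w) m" using Bi_min[OF y] by blast
  have xmin: "\<not> walk_to adj x (Bbase V adj u v w) m" if "m < k" for m
  proof
    assume "walk_to adj x (Bbase V adj u v w) m"
    then have "walk_to adj y (Bbase V adj u v w) (Suc m)"
      using x(1) by (subst walkSuc) blast
    then show False using ymin[of "Suc m"] that by simp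
  qed
  show ?thesis
  proof (cases k)
    case 0
    then show ?thesis using x(2) 0 walk0[THEN iffD1] sym[OF x(1)] by fastforce
  next
    case (Suc k')
    have nyA: "\<not> adj y u" "\<not> adj y v" "\<not> adj y w" using noA[OF yp(1-4)] by auto
    have xV: "x \<in> V" using inV[OF sym[OF x(1)]] .
    have xA: "x \<notin> Aset u v w" using nyA x(1) unfolding Aset_def by auto
    have xC: "x \<notin> Cset V adj u v w" using noC[OF yp] x(1) by blast
    have xB: "x \<notin> Bbase V adj u v w" using xmin[of 0] walk0[THEN iffD2] Suc by fastforce
    have xD: "x \<notin> Dset V adj u v w" using D_excl[OF _ yp sym[OF x(1)]] by blast
    have "dist_set_eq adj x (Bbase V adj u v w) (Suc k')"
      using x(2) xmin Suc unfolding dist_set_eq_def by simp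
    then have "x \<in> Bi V adj u v w k" using Suc xV xA xC xB xD by simp
    then show ?thesis using sym[OF x(1)] by blast
  qed
qed

lemma Bi_pred:
  assumes x: "x \<in> Bi V adj u v w k" and y: "y \<in> Bi V adj u v w (Suc k)" and xy: "adj x y"
  shows "\<exists>p. adj x p \<and> \<not> adj y p \<and> p \<noteq> y"
proof (cases k)
  case 0
  have yp: "y \<in> V" "y \<notin> Aset u v w" "y \<notin> Bbase V adj u v w" "y \<notin> Cset V adj u v w"
    using y by auto
  have nyA: "\<not> adj y u" "\<not> adj y v" "\<not> adj y w" using noA[OF yp] by auto
  have "x \<in> Bbase V adj u v w" using x 0 by simp
  then have "card {a \<in> Aset u v w. adj x a} \<noteq> 0" unfolding Bbase_def by auto
  then obtain a where "a \<in> Aset u v w" "adj x a" by (metis (mono_tags, lifting) card.empty empty_Collect_eq)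
  then show ?thesis using nyA yp(2) unfolding Aset_def by auto
next
  case (Suc k')
  obtain p where p: "adj x p" "walk_to adj p (Bbase V adj u v w) k'"
    proof -
    have "walk_to adj x (Bbase V adj u v w) (Suc k')" using Bi_walk[OF x] Suc by simp
    from walkSuc[THEN iffD1, OF this] show ?thesis using that by blast
  qed
  have ymin: "\<And>m. m < Suc k \<Longrightarrow> \<not> walk_to adj y (Bbase V adj u v w) m" using Bi_min[OF y] by blast
  have "\<not> adj y p"
  proof
    assume "adj y p"
    then have "walk_to adj y (Bbase V adj u v w) (Suc k')"
      using p(2) by (subst walkSuc) blast
    then show False using ymin[of "Suc k'"] Suc by simp
  qed
  moreover have "p \<noteq> y"
  proof
    assume "p = y"
    then show False using ymin[of k'] p(2) Suc by simp
  qed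
  ultimately show ?thesis using p(1) by blast
qed

lemma down_unique:
  assumes F3: "\<forall>e \<in> Ei V adj u v w k. card (Fset adj e) < 3"
    and y: "y \<in> Bi V adj u v w (Suc k)"
    and z1: "z1 \<in> Bi V adj u v w (Suc (Suc k))" and z2: "z2 \<in> Bi V adj u v w (Suc (Suc k))"
    and yz1: "adj y z1" and yz2: "adj y z2"
  shows "z1 = z2"
proof (rule ccontr)
  assume ne: "z1 \<noteq> z2"
  obtain x where x: "x \<in> Bi V adj u v w k" "adj x y" using Bi_up[OF y] by blast
  obtain p where p: "adj x p" "\<not> adj y p" "p \<noteq> y" using Bi_pred[OF x(1) y x(2)] by blast
  have nxz: "\<not> adj x z" "x \<noteq> z" if "z \<in> Bi V adj u v w (Suc (Suc k))" for z
  proof -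
    show "\<not> adj x z" using Bi_adj[OF x(1) that] sym by fastforce
    show "x \<noteq> z" using Bi_disj[OF x(1)] that by fastforce
  qed
  have f1: "{x, p} \<in> Fset adj {x, y}"
    using FI[OF G sym[OF x(2)] p(1) p(2) p(3)[symmetric]] by (simp add: insert_commute)
  have f2: "{y, z1} \<in> Fset adj {x, y}" by (rule FI[OF G x(2) yz1 nxz(1)[OF z1] nxz(2)[OF z1]])
  have f3: "{y, z2} \<in> Fset adj {x, y}" by (rule FI[OF G x(2) yz2 nxz(1)[OF z2] nxz(2)[OF z2]])
  have sub: "{{x, p}, {y, z1}, {y, z2}} \<subseteq> Fset adj {x, y}" using f1 f2 f3 by auto
  have xy: "x \<noteq> y" using x(2) irr by auto
  have pz: "p \<noteq> z1" "p \<noteq> z2" using p(1) nxz(1)[OF z1] nxz(1)[OF z2] by auto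
  have "card {{x, p}, {y, z1}, {y, z2}} = 3"
    using ne xy pz nxz(2)[OF z1] nxz(2)[OF z2] by (auto simp: doubleton_eq_iff)
  then have "card (Fset adj {x, y}) \<ge> 3" using card_mono[OF Fset_finite[OF G] sub] by simp
  moreover have "{x, y} \<in> Ei V adj u v w k" unfolding Ei_def using x y by blast
  ultimately show False using F3 by fastforce
qed

end

theorem corollary1:
  fixes V :: "'a set" and adj :: "'a \<Rightarrow> 'a \<Rightarrow> bool" and u v w :: 'a
  assumes "graph V adj"
    and "\<forall>e \<in> edges adj. card (Fset adj e) < 4"
    and "\<forall>a b c d. \<not> induced_C4 adj a b c d"
    and "\<forall>xs. set xs \<subseteq> V \<and> length xs \<ge> 7 \<longrightarrow> \<not> induced_path adj xs"
    and "adj u v" and "adj v w" and "u \<noteq> w" and "\<not> adj u w"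
  shows "\<forall>i::nat. 1 \<le> i \<and> enat i \<le> jidx V adj u v w \<longrightarrow>
           card (Ei V adj u v w i) \<le> card (Ei V adj u v w (i - 1))"
proof (intro allI impI)
  note G = assms(1) and A = assms(1,2,5,6,7,8)
  fix i assume hi: "1 \<le> i \<and> enat i \<le> jidx V adj u v w"
  obtain k where i: "i = Suc k" using hi by (cases i) auto
  let ?E = "Ei V adj u v w" and ?B = "Bi V adj u v w"
  have F3: "\<forall>e\<in>?E k. card (Fset adj e) < 3"
  proof (cases "\<exists>i. \<exists>e\<in>?E i. card (Fset adj e) \<ge> 3")
    case True
    then have "Suc k \<le> (LEAST i. \<exists>e\<in>?E i. card (Fset adj e) \<ge> 3)" using hi i by (simp add: jidx_def)
    then have "k < (LEAST i. \<exists>e\<in>?E i. card (Fset adj e) \<ge> 3)" by simp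
    then have "\<not> (\<exists>e\<in>?E k. card (Fset adj e) \<ge> 3)" by (rule not_less_Least)
    then show ?thesis by (simp add: not_le)
  next
    case False then show ?thesis by (simp add: not_le)
  qed
  define g where "g y = (SOME x. x \<in> ?B k \<and> adj x y)" for y
  have g: "g y \<in> ?B k \<and> adj (g y) y" if yB: "y \<in> ?B (Suc k)" for y
    proof -
    obtain x where "x \<in> ?B k" "adj x y" using Bi_up[OF A yB] by blast
    then have "x \<in> ?B k \<and> adj x y" by blast
    then show ?thesis unfolding g_def by (rule someI)
  qed
  define h where "h e = (THE y. y \<in> e \<and> y \<in> ?B (Suc k))" for e
  have hE: "\<exists>a b. e = {a, b} \<and> adj a b \<and> a \<in> ?B (Suc k) \<and> b \<in> ?B (Suc (Suc k)) \<and> h e = a"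
    if eE: "e \<in> ?E (Suc k)" for e
  proof -
    obtain a b where ab: "e = {a, b}" "adj a b" "a \<in> ?B (Suc k)" "b \<in> ?B (Suc (Suc k))"
      using eE unfolding Ei_def by blast
    have "b \<notin> ?B (Suc k)"
    proof
      assume "b \<in> ?B (Suc k)"
      from Bi_disj[OF ab(4) this] show False by simp
    qed
    then have "h e = a" unfolding h_def using ab by (intro the_equality) auto
    then show ?thesis using ab by blast
  qed
  define f where "f e = {g (h e), h e}" for e
  have fin: "finite (?E k)"
  proof -
    have "?E k \<subseteq> Pow V"
    proof
      fix e assume "e \<in> ?E k"
      then obtain x y where "e = {x, y}" "x \<in> ?B k" "y \<in> ?B (Suc k)" unfolding Ei_def by blast
      then show "e \<in> Pow V" using Bi_V[of x V adj u v w k] Bi_V[of y V adj u v w "Suc k"] by simp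
    qed
    moreover have "finite V" using G unfolding graph_def by blast
    ultimately show ?thesis by (meson finite_Pow_iff finite_subset)
  qed
  have img: "f ` ?E (Suc k) \<subseteq> ?E k"
  proof
    fix e' assume "e' \<in> f ` ?E (Suc k)"
    then obtain e where e: "e \<in> ?E (Suc k)" "e' = f e" by blast
    obtain a b where ab: "e = {a, b}" "adj a b" "a \<in> ?B (Suc k)" "b \<in> ?B (Suc (Suc k))" "h e = a"
      using hE[OF e(1)] by blast
    have "e' = {g a, a}" using e(2) ab(5) unfolding f_def by simp
    then show "e' \<in> ?E k" unfolding Ei_def using g[OF ab(3)] ab(3) by blast
  qed
  have inj: "inj_on f (?E (Suc k))"
  proof
    fix e1 e2 assume e1: "e1 \<in> ?E (Suc k)" and e2: "e2 \<in> ?E (Suc k)" and eq: "f e1 = f e2"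
    obtain a1 b1 where ab1: "e1 = {a1, b1}" "adj a1 b1" "a1 \<in> ?B (Suc k)" "b1 \<in> ?B (Suc (Suc k))" "h e1 = a1"
      using hE[OF e1] by blast
    obtain a2 b2 where ab2: "e2 = {a2, b2}" "adj a2 b2" "a2 \<in> ?B (Suc k)" "b2 \<in> ?B (Suc (Suc k))" "h e2 = a2"
      using hE[OF e2] by blast
    have eq': "{g a1, a1} = {g a2, a2}" using eq ab1(5) ab2(5) unfolding f_def by simp
    have "a1 \<noteq> g a2"
    proof
      assume "a1 = g a2"
      then have "a1 \<in> ?B k" using g[OF ab2(3)] by simp
      from Bi_disj[OF this ab1(3)] show False by simp
    qed
    then have a: "a1 = a2" using eq' by (auto simp: doubleton_eq_iff)
    have "adj a1 b2" using ab2(2) a by simp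
    then have "b1 = b2" by (rule down_unique[OF A F3 ab1(3) ab1(4) ab2(4) ab1(2)])
    then show "e1 = e2" using ab1(1) ab2(1) a by simp
  qed
  have "card (?E (Suc k)) \<le> card (?E k)" by (rule card_inj_on_le[OF inj img fin])
  then show "card (?E i) \<le> card (?E (i - 1))" using i by simp
qed

end
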